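(* Let $\gamma > 0$. Suppose $G$ is a graph on $n$ vertices such that $d(x) + d(y) \geq (1+2\gamma) n$ for all pairs of distinct non-adjacent vertices $x, y \in V(G)$. Let $d_1 \leq \dots \leq d_n$ be the degree sequence of $G$. Then for all $i < n/2$, $$d_i \geq i + \gamma n \quad \text{or} \quad d_{n-i-\gamma n} \geq n - i.$$
   Context: Floors and ceilings are omitted where they do not affect the argument (e.g. $\gamma n$ is treated as an integer). *)

theory Defs
  imports Complex_Main
begin

definition simple_graph :: "nat \<Rightarrow> (nat \<Rightarrow> nat \<Rightarrow> bool) \<Rightarrow> bool" where
  "simple_graph n E \<longleftrightarrow> (\<forall>x y. E x y \<longrightarrow> x < n \<and> y < n) \<and>
     (\<forall>x y. E x y \<longrightarrow> E y x) \<and> (\<forall>x. \<not> E x x)"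

definition degree :: "nat \<Rightarrow> (nat \<Rightarrow> nat \<Rightarrow> bool) \<Rightarrow> nat \<Rightarrow> nat" where
  "degree n E x = card {y. y < n \<and> E x y}"

text \<open>Degree sequence d_1 \<le> ... \<le> d_n, indexed from 1.\<close>
definition deg_seq :: "nat \<Rightarrow> (nat \<Rightarrow> nat \<Rightarrow> bool) \<Rightarrow> nat \<Rightarrow> nat" where
  "deg_seq n E j = sort (map (degree n E) [0..<n]) ! (j - 1)"

end

theory Submission
  imports Defs
begin

lemma main_count:
  assumes sg: "simple_graph n E"
    and hyp: "\<And>x y. x < n \<Longrightarrow> y < n \<Longrightarrow> x \<noteq> y \<Longrightarrow> \<not> E x y \<Longrightarrow>
           n + 2 * g \<le> degree n E x + degree n E y"
    and Xs: "X \<subseteq> {..<n}" and cX: "card X = i" and i2: "2 * i < n" and ig: "i + g < n"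
    and i1: "1 \<le> i"
    and low: "\<And>r. r \<in> X \<Longrightarrow> degree n E r < i + g"
  shows False
proof -
  have sym: "\<And>x y. E x y \<Longrightarrow> E y x" and irr: "\<And>x. \<not> E x x"
    and bnd: "\<And>x y. E x y \<Longrightarrow> x < n \<and> y < n"
    using sg unfolding simple_graph_def by blast+
  have finX: "finite X" using Xs finite_subset by blast
  have clique: "E r r'" if "r \<in> X" "r' \<in> X" "r \<noteq> r'" for r r'
  proof (rule ccontr)
    assume "\<not> E r r'"
    then have "n + 2 * g \<le> degree n E r + degree n E r'"
      using hyp[of r r'] that Xs by auto
    moreover have "degree n E r < i + g" "degree n E r' < i + g" using low that by auto
    ultimately show False using i2 by linarith
  qed
  define Ou where "Ou = {..<n} - X"
  have finO: "finite Ou" unfolding Ou_def by simp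
  have cO: "card Ou = n - i" unfolding Ou_def using Xs cX by (simp add: card_Diff_subset finX)
  define nb where "nb r = {y. y < n \<and> E r y}" for r
  have finnb: "finite (nb r)" for r unfolding nb_def by simp
  define nn where "nn r = {w \<in> Ou. \<not> E r w}" for r
  have A: "n - i - g \<le> card (nn r)" if rX: "r \<in> X" for r
  proof -
    have "nb r \<inter> X = X - {r}"
      unfolding nb_def using clique rX Xs irr by auto
    then have c1: "card (nb r \<inter> X) = i - 1" using cX finX rX by simp
    have split: "nb r = (nb r \<inter> X) \<union> (nb r \<inter> Ou)" unfolding nb_def Ou_def by auto
    then have "card (nb r) = card (nb r \<inter> X) + card (nb r \<inter> Ou)"
      proof -
      have "(nb r \<inter> X) \<inter> (nb r \<inter> Ou) = {}" unfolding Ou_def by auto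
      then show ?thesis using split finnb
        by (metis card_Un_disjoint finite_Int)
    qed
    moreover have "card (nb r) = degree n E r" unfolding nb_def degree_def by simp
    ultimately have c2: "card (nb r \<inter> Ou) \<le> g" using c1 low[OF rX] i1 by linarith
    have "nn r = Ou - (nb r \<inter> Ou)" unfolding nn_def nb_def Ou_def by auto
    then have "card (nn r) = card Ou - card (nb r \<inter> Ou)"
      by (simp add: card_Diff_subset finO)
    then show ?thesis using cO c2 by linarith
  qed
  define K where "K w = {r \<in> X. \<not> E r w}" for w
  have B: "card (K w) = 0 \<or> card (K w) + g + 2 \<le> i" if oO: "w \<in> Ou" for w
  proof (cases "K w = {}")
    case True then show ?thesis by simp
  next
    case False
    then obtain r where r: "r \<in> X" "\<not> E r w" unfolding K_def by auto
    have on: "w < n" "w \<notin> X" using oO unfolding Ou_def by auto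
    have "n + 2 * g \<le> degree n E r + degree n E w"
      using hyp[of r w] r on Xs by auto
    then have d1: "n + g + 1 \<le> degree n E w + i" using low[OF r(1)] by linarith
    have "nb w \<subseteq> {..<n} - {w} - K w"
      unfolding nb_def K_def using irr sym by auto
    then have "card (nb w) \<le> card ({..<n} - {w} - K w)"
      by (intro card_mono) auto
    also have "\<dots> = n - 1 - card (K w)"
    proof -
      have "K w \<subseteq> {..<n} - {w}" unfolding K_def using Xs on by auto
      moreover have "finite (K w)" unfolding K_def using finX by simp
      ultimately show ?thesis using on by (simp add: card_Diff_subset)
    qed
    finally have "degree n E w \<le> n - 1 - card (K w)" unfolding nb_def degree_def by simp
    moreover have "card (K w) \<le> n - 1"
    proof -
      have "K w \<subseteq> {..<n} - {w}" unfolding K_def using Xs on by auto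
      then have "card (K w) \<le> card ({..<n} - {w})" by (intro card_mono) auto
      then show ?thesis using on by simp
    qed
    ultimately show ?thesis using d1 by linarith
  qed
  have swap: "Sigma Ou K = (\<lambda>(r, w). (w, r)) ` Sigma X nn"
    unfolding K_def nn_def Ou_def by auto
  have "card (Sigma Ou K) = card (Sigma X nn)"
    unfolding swap by (rule card_image) (auto simp: inj_on_def)
  then have eq: "(\<Sum>w\<in>Ou. card (K w)) = (\<Sum>r\<in>X. card (nn r))"
    using card_SigmaI[of Ou K] card_SigmaI[of X nn] finO finX
    unfolding K_def nn_def by simp
  have L: "i * (n - i - g) \<le> (\<Sum>r\<in>X. card (nn r))"
    using sum_mono[of X "\<lambda>_. n - i - g" "\<lambda>r. card (nn r)"] A cX by simp
  show False
  proof (cases "g + 2 \<le> i")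
    case True
    have "(\<Sum>w\<in>Ou. card (K w)) \<le> (\<Sum>w\<in>Ou. i - g - 2)"
      by (rule sum_mono) (use B in fastforce)
    then have R: "(\<Sum>w\<in>Ou. card (K w)) \<le> (n - i) * (i - g - 2)" using cO by simp
    have key: "i * (n - i - g) \<le> (n - i) * (i - g - 2)" using L R eq by linarith
    then have "real i * (real n - real i - real g) \<le> (real n - real i) * (real i - real g - 2)"
    proof -
      have h: "real (i * (n - i - g)) \<le> real ((n - i) * (i - g - 2))"
        using key by (simp only: of_nat_le_iff)
      have e1: "real (n - i - g) = real n - real i - real g" using ig by (simp add: of_nat_diff)
      have e2: "real (n - i) = real n - real i" using ig by (simp add: of_nat_diff)
      have e3: "real (i - g - 2) = real i - real g - 2" using True by (simp add: of_nat_diff)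
      show ?thesis using h unfolding of_nat_mult e1 e2 e3 .
    qed
    moreover have "(real n - real i) * (real i - real g - 2) - real i * (real n - real i - real g)
        = - ((real g + 2) * (real n - 2 * real i)) - 2 * real i"
      by (simp add: algebra_simps)
    moreover have "(real g + 2) * (real n - 2 * real i) > 0" using i2 by simp
    ultimately show False using i1 by linarith
  next
    case False
    have "(\<Sum>w\<in>Ou. card (K w)) = 0" using B False by (intro sum.neutral) fastforce
    moreover have "0 < i * (n - i - g)" using i1 ig by simp
    ultimately show False using L eq by linarith
  qed
qed

lemma sort_filter_len: "length (filter P (sort xs)) = length (filter P xs)"
  by (metis filter_sort length_sort)

theorem lemma2p2:
  fixes n g :: nat and \<gamma> :: real and E :: "nat \<Rightarrow> nat \<Rightarrow> bool"
  assumes "simple_graph n E"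
    and "\<gamma> > 0" and "\<gamma> < 1/2"
    and "real g = \<gamma> * real n"
    and "\<And>x y. x < n \<Longrightarrow> y < n \<Longrightarrow> x \<noteq> y \<Longrightarrow> \<not> E x y \<Longrightarrow>
           real (degree n E x + degree n E y) \<ge> (1 + 2 * \<gamma>) * real n"
  shows "\<forall>i. 1 \<le> i \<and> real i < real n / 2 \<longrightarrow>
           deg_seq n E i \<ge> i + g \<or> deg_seq n E (n - i - g) \<ge> n - i"
proof (intro allI impI disjI1)
  fix i assume i: "1 \<le> i \<and> real i < real n / 2"
  have hyp: "n + 2 * g \<le> degree n E x + degree n E y"
    if "x < n" "y < n" "x \<noteq> y" "\<not> E x y" for x y
  proof -
    have "real (n + 2 * g) = (1 + 2 * \<gamma>) * real n" using assms(4) by (simp add: algebra_simps)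
    then show ?thesis using assms(5)[OF that] by linarith
  qed
  have npos: "real n > 0" using i by linarith
  have "(2 * \<gamma>) * real n < 1 * real n"
    by (rule mult_strict_right_mono) (use assms(3) npos in auto)
  then have "2 * (\<gamma> * real n) < real n" by (simp add: mult.assoc)
  then have g2: "2 * real g < real n" using assms(4) by simp
  have i2: "2 * i < n" using i by linarith
  have ig: "i + g < n" using i g2 by linarith
  define L where "L = sort (map (degree n E) [0..<n])"
  have lenL: "length L = n" unfolding L_def by simp
  show "deg_seq n E i \<ge> i + g"
  proof (rule ccontr)
    assume "\<not> ?thesis"
    then have lt: "L ! (i - 1) < i + g" unfolding deg_seq_def L_def by simp
    have "{k. k < i} \<subseteq> {k. k < length L \<and> L ! k < i + g}"
    proof
      fix k assume "k \<in> {k. k < i}"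
      then have k: "k \<le> i - 1" by simp
      have "sorted L" unfolding L_def by simp
      then have "L ! k \<le> L ! (i - 1)" using k lenL i2 sorted_nth_mono by fastforce
      then show "k \<in> {k. k < length L \<and> L ! k < i + g}" using lt k lenL i2 by auto
    qed
    then have "i \<le> card {k. k < length L \<and> L ! k < i + g}"
      by (metis card_lessThan lessThan_def card_mono finite_Collect_conjI finite_lessThan lessThan_def)
    also have "\<dots> = length (filter (\<lambda>x. x < i + g) L)" by (simp add: length_filter_conv_card)
    also have "\<dots> = length (filter (\<lambda>v. degree n E v < i + g) [0..<n])"
      unfolding L_def sort_filter_len by (simp add: filter_map comp_def)
    also have "\<dots> = card {v. v < n \<and> degree n E v < i + g}"
      by (subst distinct_length_filter) (auto intro: arg_cong[where f=card])
    finally have ci: "i \<le> card {v. v < n \<and> degree n E v < i + g}" .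
    obtain X where X: "X \<subseteq> {v. v < n \<and> degree n E v < i + g}" "card X = i"
      using obtain_subset_with_card_n[OF ci] by blast
    show False
      by (rule main_count[OF assms(1) hyp _ X(2) i2 ig]) (use X i in auto)
  qed
qed

end
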